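(* Assume Conditions (A), (F), (W), (B), (P) and (U) from the context hold. With $f_h(t,v)=P_hf(t,v)$ and $B_h(t,v)=P_hB(t,v)P_U$, for all $u\in\mathrm{dom}(A^{\theta_{X_0}})$, $v,w\in H$ and $s,t\in[0,t_f]$: (i) $\|f_h(s,v)-f_h(t,w)\|_H\le C(|s-t|^{1/2}+\|v-w\|_H)$; (ii) $\|P_hB(t,u)-B_h(t,u)\|_{L^0_2}\le Ch^{2\theta_U+1}(1+\|A^{\theta_{X_0}}u\|_H)$; (iii) $\|B_h(s,v)-B_h(t,w)\|_{L^0_2}\le C(|s-t|^{1/2}+\|v-w\|_H)$.
   Context: Let $t_f>0$ and $(H,(\cdot,\cdot)_H,\|\cdot\|_H)$ a real Hilbert space, $H_{\mathbb C}$ its complexification; $C$ is a generic constant independent of $h$. Condition (A): $A:\mathrm{dom}(A)\subset H\to H$ and $A_\ell:\mathrm{dom}(A_\ell)\subset H\to H$ ($\ell=1,2$) are linear with $A=A_1+A_2$ on $\mathrm{dom}(A_1)\cap\mathrm{dom}(A_2)\subseteq\mathrm{dom}(A)$; $A$ is densely defined, positive and sectorial (there is $\varphi\in(0,\pi/2)$ with $0$ and $S_\varphi=\{\lambda\in\mathbb C:\varphi<|\arg\lambda|\le\pi\}$ in the resolvent set and $\|(A-\lambda I)^{-1}\|_{\mathcal L(H_{\mathbb C})}\le C/|\lambda|$ on $S_\varphi$); $A_\ell A^{-1}$ is bounded on $H$. $A^\zeta$ are fractional powers. A number $\theta_{X_0}\in[0,1)$ is fixed. Condition (F): $f:\mathbb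 R\times H\to H$, $\theta_f\in[0,\frac12)$, $\|f(t,v)\|_H\le C(1+\|v\|_H)$, $\|A^{\theta_f}f(t,w)\|_H\le C(1+\|A^{\theta_f}w\|_H)$ for $w\in\mathrm{dom}(A^{\theta_f})$, $\|f(s,v)-f(t,w)\|_H\le C(|s-t|^{1/2}+\|v-w\|_H)$. Condition (W): $Q$ is a non-negative definite symmetric trace-class operator on a Hilbert space $U$, $W$ a $Q$-Wiener process; $L^0_2$ is the space of linear $E:Q^{1/2}U\to H$ with $\|E\|_{L^0_2}=\|EQ^{1/2}\|_{\mathcal{HS}(U,H)}<\infty$. Condition (B): $B:[0,t_f]\times H\to L^0_2$, $\theta_B\in[0,\frac12)$, $\|B(t,v)\|_{L^0_2}\le C(1+\|v\|_H)$, $\|A^{\theta_B}B(t,w)\|_{L^0_2}\le C(1+\|A^{\theta_B}w\|_H)$ for $w\in\mathrm{dom}(A^{\theta_B})$, $\|B(t,u)\|_{\mathcal L(U,H)}\le C(1+\|A^{\theta_{X_0}}u\|_H)$ for $u\in\mathrm{dom}(A^{\theta_{X_0}})$, $\|B(s,v)-B(t,w)\|_{L^0_2}\le C(|s-t|^{1/2}+\|v-w\|_H)$. Condition (P): $V_h\subset H$ ($h\in I\subset(0,\infty)$) finite-dimensional, $P_h:H\to V_h$ bounded projections with $\|(I-P_h)v\|_H\le Ch^2\|Av\|_H$ for $v\in\mathrm{dom}(A)$. Condition (U): $\theta_U\in[0,\frac12)$; $\{e_k\}$ orthonormal eigenbasis of $Q$ in $U$ with eigenvalues $q_k=\mathcal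 O(k^{-(2r+1+\varepsilon)})$, $r\ge0$, $\varepsilon>0$; $U_h=\mathrm{span}\{e_1,\dots,e_{N_U}\}$ with $(N_U+1)^{-r}\le Ch^{2\theta_U+1}$; $P_U$ orthogonal projection onto $U_h$. *)

theory Defs
  imports "HOL-Analysis.Analysis"
begin

section \<open>Unbounded linear operators given as (domain, map)\<close>

definition lin_op :: "'a::real_vector set \<Rightarrow> ('a \<Rightarrow> 'b::real_vector) \<Rightarrow> bool" where
  "lin_op D T \<longleftrightarrow> subspace D \<and>
     (\<forall>x\<in>D. \<forall>y\<in>D. T (x + y) = T x + T y) \<and> (\<forall>c. \<forall>x\<in>D. T (c *\<^sub>R x) = c *\<^sub>R T x)"

text \<open>Inverse of A (well defined when 0 is in the resolvent set).\<close>
definition op_inv :: "'h::real_vector set \<Rightarrow> ('h \<Rightarrow> 'h) \<Rightarrow> 'h \<Rightarrow> 'h" where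
  "op_inv D A z = (THE x. x \<in> D \<and> A x = z)"

definition res_op :: "'h::real_vector set \<Rightarrow> ('h \<Rightarrow> 'h) \<Rightarrow> real \<Rightarrow> 'h \<Rightarrow> 'h" where
  "res_op D A t v = (THE x. x \<in> D \<and> A x + t *\<^sub>R x = v)"

text \<open>Negative fractional power A^{-zeta}, 0 < zeta < 1, via the Balakrishnan formula.\<close>
definition frac_pow_neg :: "'h::{real_normed_vector} set \<Rightarrow> ('h \<Rightarrow> 'h) \<Rightarrow> real \<Rightarrow> 'h \<Rightarrow> 'h" where
  "frac_pow_neg D A \<zeta> v =
     (sin (pi * \<zeta>) / pi) *\<^sub>R integral {0<..} (\<lambda>t. (t powr (- \<zeta>)) *\<^sub>R res_op D A t v)"

definition frac_dom :: "'h::{real_normed_vector} set \<Rightarrow> ('h \<Rightarrow> 'h) \<Rightarrow> real \<Rightarrow> 'h set" where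
  "frac_dom D A \<zeta> = (if \<zeta> = 0 then UNIV else range (frac_pow_neg D A \<zeta>))"

definition frac_pow :: "'h::{real_normed_vector} set \<Rightarrow> ('h \<Rightarrow> 'h) \<Rightarrow> real \<Rightarrow> 'h \<Rightarrow> 'h" where
  "frac_pow D A \<zeta> w = (if \<zeta> = 0 then w else (THE v. frac_pow_neg D A \<zeta> v = w))"

text \<open>Sectoriality, stated on the complexification H_C = H x H, (x,y) ~ x + i y,
  A_C (x,y) = (A x, A y); (A_C - lambda)(x,y) = (A x - Re l x + Im l y, A y - Re l y - Im l x);
  the norm on H_C is sqrt(|x|^2 + |y|^2).\<close>
definition sectorial_op :: "'h::real_normed_vector set \<Rightarrow> ('h \<Rightarrow> 'h) \<Rightarrow> real \<Rightarrow> bool" where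
  "sectorial_op D A \<phi> \<longleftrightarrow> 0 < \<phi> \<and> \<phi> < pi / 2 \<and>
     (\<forall>z. \<exists>!x. x \<in> D \<and> A x = z) \<and> (\<exists>C. \<forall>x\<in>D. norm x \<le> C * norm (A x)) \<and>
     (\<exists>C. \<forall>l::complex. l \<noteq> 0 \<and> \<phi> < \<bar>Arg l\<bar> \<longrightarrow>
        (\<forall>z1 z2. \<exists>!p. fst p \<in> D \<and> snd p \<in> D \<and>
            A (fst p) - Re l *\<^sub>R fst p + Im l *\<^sub>R snd p = z1 \<and>
            A (snd p) - Re l *\<^sub>R snd p - Im l *\<^sub>R fst p = z2) \<and>
        (\<forall>x y. x \<in> D \<longrightarrow> y \<in> D \<longrightarrow>
            sqrt ((norm x)\<^sup>2 + (norm y)\<^sup>2) \<le> C / cmod l *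
            sqrt ((norm (A x - Re l *\<^sub>R x + Im l *\<^sub>R y))\<^sup>2 +
                  (norm (A y - Re l *\<^sub>R y - Im l *\<^sub>R x))\<^sup>2)))"

definition condA :: "'h::{real_inner,complete_space} set \<Rightarrow> ('h \<Rightarrow> 'h) \<Rightarrow> 'h set \<Rightarrow> ('h \<Rightarrow> 'h)
    \<Rightarrow> 'h set \<Rightarrow> ('h \<Rightarrow> 'h) \<Rightarrow> real \<Rightarrow> real \<Rightarrow> bool" where
  "condA D A D1 A1 D2 A2 \<phi> \<theta>X0 \<longleftrightarrow>
     lin_op D A \<and> lin_op D1 A1 \<and> lin_op D2 A2 \<and>
     D1 \<inter> D2 \<subseteq> D \<and> (\<forall>x \<in> D1 \<inter> D2. A x = A1 x + A2 x) \<and>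
     closure D = UNIV \<and> (\<forall>x\<in>D. 0 \<le> A x \<bullet> x) \<and> sectorial_op D A \<phi> \<and>
     (\<forall>z. op_inv D A z \<in> D1) \<and> (\<exists>C. \<forall>z. norm (A1 (op_inv D A z)) \<le> C * norm z) \<and>
     (\<forall>z. op_inv D A z \<in> D2) \<and> (\<exists>C. \<forall>z. norm (A2 (op_inv D A z)) \<le> C * norm z) \<and>
     0 \<le> \<theta>X0 \<and> \<theta>X0 < 1"

definition condF :: "'h::{real_inner,complete_space} set \<Rightarrow> ('h \<Rightarrow> 'h) \<Rightarrow> (real \<Rightarrow> 'h \<Rightarrow> 'h) \<Rightarrow> real \<Rightarrow> bool" where
  "condF D A f \<theta>f \<longleftrightarrow> 0 \<le> \<theta>f \<and> \<theta>f < 1/2 \<and>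
     (\<exists>C. \<forall>t v. norm (f t v) \<le> C * (1 + norm v)) \<and>
     (\<exists>C. \<forall>t. \<forall>w \<in> frac_dom D A \<theta>f. f t w \<in> frac_dom D A \<theta>f \<and>
          norm (frac_pow D A \<theta>f (f t w)) \<le> C * (1 + norm (frac_pow D A \<theta>f w))) \<and>
     (\<exists>C. \<forall>s t v w. norm (f s v - f t w) \<le> C * (\<bar>s - t\<bar> powr (1/2) + norm (v - w)))"

definition condQ :: "('u::{real_inner,complete_space} \<Rightarrow>\<^sub>L 'u) \<Rightarrow> (nat \<Rightarrow> 'u) \<Rightarrow> (nat \<Rightarrow> real) \<Rightarrow> bool" where
  "condQ Q e q \<longleftrightarrow>
     (\<forall>x y. blinfun_apply Q x \<bullet> y = x \<bullet> blinfun_apply Q y) \<and>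
     (\<forall>x. 0 \<le> blinfun_apply Q x \<bullet> x) \<and>
     (\<forall>k\<ge>1. norm (e k) = 1) \<and> (\<forall>j\<ge>1. \<forall>k\<ge>1. j \<noteq> k \<longrightarrow> e j \<bullet> e k = 0) \<and>
     closure (span (e ` {1..})) = UNIV \<and>
     (\<forall>k\<ge>1. blinfun_apply Q (e k) = q k *\<^sub>R e k \<and> 0 \<le> q k) \<and>
     q summable_on {1..}"

definition Q_half :: "(nat \<Rightarrow> 'u::real_inner) \<Rightarrow> (nat \<Rightarrow> real) \<Rightarrow> 'u \<Rightarrow> 'u" where
  "Q_half e q z = (\<Sum>\<^sub>\<infinity>k\<in>{1..}. (sqrt (q k) * (z \<bullet> e k)) *\<^sub>R e k)"

definition Q_half_U :: "(nat \<Rightarrow> 'u::real_inner) \<Rightarrow> (nat \<Rightarrow> real) \<Rightarrow> 'u set" where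
  "Q_half_U e q = range (Q_half e q)"

text \<open>||E||_{L^0_2} = ||E Q^{1/2}||_{HS(U,H)}, computed in the eigenbasis: Q^{1/2} e_k = sqrt(q_k) e_k.\<close>
definition L02_norm :: "(nat \<Rightarrow> 'u::real_inner) \<Rightarrow> (nat \<Rightarrow> real) \<Rightarrow> ('u \<Rightarrow> 'h::real_normed_vector) \<Rightarrow> real" where
  "L02_norm e q E = sqrt (\<Sum>\<^sub>\<infinity>k\<in>{1..}. (norm (E (sqrt (q k) *\<^sub>R e k)))\<^sup>2)"

definition in_L02 :: "(nat \<Rightarrow> 'u::real_inner) \<Rightarrow> (nat \<Rightarrow> real) \<Rightarrow> ('u \<Rightarrow> 'h::real_normed_vector) \<Rightarrow> bool" where
  "in_L02 e q E \<longleftrightarrow> lin_op (Q_half_U e q) E \<and>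
     (\<lambda>k. (norm (E (sqrt (q k) *\<^sub>R e k)))\<^sup>2) summable_on {1..}"

definition condB :: "'h::{real_inner,complete_space} set \<Rightarrow> ('h \<Rightarrow> 'h) \<Rightarrow> real \<Rightarrow>
    (nat \<Rightarrow> 'u::{real_inner,complete_space}) \<Rightarrow> (nat \<Rightarrow> real) \<Rightarrow> real \<Rightarrow>
    (real \<Rightarrow> 'h \<Rightarrow> 'u \<Rightarrow> 'h) \<Rightarrow> real \<Rightarrow> bool" where
  "condB D A tf e q \<theta>X0 B \<theta>B \<longleftrightarrow> 0 \<le> \<theta>B \<and> \<theta>B < 1/2 \<and>
     (\<forall>t\<in>{0..tf}. \<forall>v. in_L02 e q (B t v)) \<and>
     (\<exists>C. \<forall>t\<in>{0..tf}. \<forall>v. L02_norm e q (B t v) \<le> C * (1 + norm v)) \<and>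
     (\<exists>C. \<forall>t\<in>{0..tf}. \<forall>w \<in> frac_dom D A \<theta>B.
        (\<forall>z \<in> Q_half_U e q. B t w z \<in> frac_dom D A \<theta>B) \<and>
        in_L02 e q (\<lambda>z. frac_pow D A \<theta>B (B t w z)) \<and>
        L02_norm e q (\<lambda>z. frac_pow D A \<theta>B (B t w z)) \<le> C * (1 + norm (frac_pow D A \<theta>B w))) \<and>
     (\<exists>C. \<forall>t\<in>{0..tf}. \<forall>u \<in> frac_dom D A \<theta>X0. \<forall>z \<in> Q_half_U e q.
        norm (B t u z) \<le> C * (1 + norm (frac_pow D A \<theta>X0 u)) * norm z) \<and>
     (\<exists>C. \<forall>s\<in>{0..tf}. \<forall>t\<in>{0..tf}. \<forall>v w.
        L02_norm e q (\<lambda>z. B s v z - B t w z) \<le> C * (\<bar>s - t\<bar> powr (1/2) + norm (v - w)))"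

definition condP :: "'h::{real_inner,complete_space} set \<Rightarrow> ('h \<Rightarrow> 'h) \<Rightarrow> real set \<Rightarrow>
    (real \<Rightarrow> 'h set) \<Rightarrow> (real \<Rightarrow> 'h \<Rightarrow>\<^sub>L 'h) \<Rightarrow> bool" where
  "condP D A I V P \<longleftrightarrow> I \<subseteq> {0<..} \<and>
     (\<forall>h\<in>I. (\<exists>S. finite S \<and> V h = span S) \<and>
        (\<forall>x. blinfun_apply (P h) x \<in> V h) \<and> (\<forall>x\<in>V h. blinfun_apply (P h) x = x)) \<and>
     (\<exists>C. \<forall>h\<in>I. norm (P h) \<le> C) \<and>
     (\<exists>C. \<forall>h\<in>I. \<forall>v\<in>D. norm (v - blinfun_apply (P h) v) \<le> C * h\<^sup>2 * norm (A v))"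

definition P_U :: "(nat \<Rightarrow> 'u::real_inner) \<Rightarrow> nat \<Rightarrow> 'u \<Rightarrow> 'u" where
  "P_U e N z = (\<Sum>k\<in>{1..N}. (z \<bullet> e k) *\<^sub>R e k)"

definition condU :: "real set \<Rightarrow> (nat \<Rightarrow> real) \<Rightarrow> real \<Rightarrow> real \<Rightarrow> real \<Rightarrow> (real \<Rightarrow> nat) \<Rightarrow> bool" where
  "condU I q \<theta>U r \<epsilon> NU \<longleftrightarrow> 0 \<le> \<theta>U \<and> \<theta>U < 1/2 \<and> 0 \<le> r \<and> 0 < \<epsilon> \<and>
     (\<exists>c. \<forall>k\<ge>1. \<bar>q k\<bar> \<le> c * real k powr (- (2 * r + 1 + \<epsilon>))) \<and>
     (\<exists>C. \<forall>h\<in>I. real (NU h + 1) powr (- r) \<le> C * h powr (2 * \<theta>U + 1))"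

definition f_h :: "(real \<Rightarrow> 'h \<Rightarrow>\<^sub>L 'h) \<Rightarrow> (real \<Rightarrow> 'h \<Rightarrow> 'h) \<Rightarrow> real \<Rightarrow> real \<Rightarrow> 'h \<Rightarrow> 'h::real_normed_vector" where
  "f_h P f h t v = blinfun_apply (P h) (f t v)"

definition B_h :: "(real \<Rightarrow> 'h \<Rightarrow>\<^sub>L 'h) \<Rightarrow> (nat \<Rightarrow> 'u::real_inner) \<Rightarrow> (real \<Rightarrow> nat) \<Rightarrow>
    (real \<Rightarrow> 'h \<Rightarrow> 'u \<Rightarrow> 'h) \<Rightarrow> real \<Rightarrow> real \<Rightarrow> 'h \<Rightarrow> 'u \<Rightarrow> 'h::real_normed_vector" where
  "B_h P e NU B h t v z = blinfun_apply (P h) (B t v (P_U e (NU h) z))"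

end

theory Submission
  imports Defs
begin


lemma infsum_le_real:
  fixes f g :: "nat \<Rightarrow> real"
  assumes "g summable_on A" "\<And>x. x \<in> A \<Longrightarrow> 0 \<le> f x" "\<And>x. x \<in> A \<Longrightarrow> f x \<le> g x"
  shows "infsum f A \<le> infsum g A"
proof -
  have "f summable_on A" using summable_on_comparison_test[OF assms(1)] assms by blast
  then show ?thesis using infsum_mono assms by blast
qed

lemma powr_summable_on:
  assumes "0 < \<epsilon>"
  shows "(\<lambda>k::nat. real k powr (-(1+\<epsilon>))) summable_on {1..}"
proof -
  have "summable (\<lambda>k::nat. real k powr (-(1+\<epsilon>)))"
    using assms by (subst summable_real_powr_iff) auto
  then have "(\<lambda>k::nat. real k powr (-(1+\<epsilon>))) summable_on UNIV"
    by (subst summable_on_UNIV_nonneg_real_iff) auto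
  then show ?thesis by (rule summable_on_subset) auto
qed

lemma Q_half_ek:
  assumes "condQ Q e q" "k \<ge> 1"
  shows "Q_half e q (e k) = sqrt (q k) *\<^sub>R e k"
proof -
  have ek: "e k \<bullet> e k = 1" using assms unfolding condQ_def
    by (metis norm_eq_1)
  have "Q_half e q (e k) = infsum (\<lambda>j. (sqrt (q j) * (e k \<bullet> e j)) *\<^sub>R e j) {k}"
    unfolding Q_half_def
  proof (rule infsum_cong_neutral)
    fix x assume "x \<in> {1..} - {k}"
    then have "e k \<bullet> e x = 0" using assms unfolding condQ_def by auto
    then show "(sqrt (q x) * (e k \<bullet> e x)) *\<^sub>R e x = 0" by simp
  qed (use assms in auto)
  also have "\<dots> = sqrt (q k) *\<^sub>R e k" using ek by simp
  finally show ?thesis .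
qed

lemma Q_half_0: "Q_half e q 0 = 0"
  unfolding Q_half_def by simp

lemma P_U_ek:
  assumes "condQ Q e q" "k \<ge> 1"
  shows "P_U e N (c *\<^sub>R e k) = (if k \<le> N then c *\<^sub>R e k else 0)"
proof -
  have ek: "e k \<bullet> e k = 1" using assms unfolding condQ_def
    by (metis norm_eq_1)
  have "P_U e N (c *\<^sub>R e k) = (\<Sum>j\<in>{1..N}. (if j = k then c *\<^sub>R e k else 0))"
    unfolding P_U_def
  proof (rule sum.cong)
    fix j assume j: "j \<in> {1..N}"
    show "(c *\<^sub>R e k \<bullet> e j) *\<^sub>R e j = (if j = k then c *\<^sub>R e k else 0)"
    proof (cases "j = k")
      case True then show ?thesis using ek by simp
    next
      case False
      then have "e k \<bullet> e j = 0" using assms j unfolding condQ_def by auto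
      then show ?thesis using False by simp
    qed
  qed simp
  also have "\<dots> = (if k \<le> N then c *\<^sub>R e k else 0)"
    using assms(2) by (simp add: sum.delta)
  finally show ?thesis .
qed

lemma xk_in:
  assumes "condQ Q e q" "k \<ge> 1"
  shows "sqrt (q k) *\<^sub>R e k \<in> Q_half_U e q"
  unfolding Q_half_U_def using Q_half_ek[OF assms] by (metis rangeI)

lemma xk_norm:
  assumes "condQ Q e q" "k \<ge> 1"
  shows "norm (sqrt (q k) *\<^sub>R e k) = sqrt (q k)"
  using assms unfolding condQ_def by auto

lemma zero_in: "0 \<in> Q_half_U e q"
  unfolding Q_half_U_def using Q_half_0 by (metis rangeI)

lemma lin_op_0:
  assumes "lin_op D T" "0 \<in> D"
  shows "T 0 = 0"
  using assms unfolding lin_op_def by (metis scale_zero_left)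



theorem lemma3p5:
  fixes D D1 D2 :: "'h::{real_inner,complete_space} set"
    and A A1 A2 :: "'h \<Rightarrow> 'h"
    and f :: "real \<Rightarrow> 'h \<Rightarrow> 'h"
    and Q :: "'u::{real_inner,complete_space} \<Rightarrow>\<^sub>L 'u"
    and e :: "nat \<Rightarrow> 'u" and q :: "nat \<Rightarrow> real"
    and B :: "real \<Rightarrow> 'h \<Rightarrow> 'u \<Rightarrow> 'h"
    and I :: "real set" and V :: "real \<Rightarrow> 'h set" and P :: "real \<Rightarrow> 'h \<Rightarrow>\<^sub>L 'h"
    and NU :: "real \<Rightarrow> nat"
    and tf \<phi> \<theta>X0 \<theta>f \<theta>B \<theta>U r \<epsilon> :: real
  assumes "0 < tf"
    and "condA D A D1 A1 D2 A2 \<phi> \<theta>X0"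
    and "condF D A f \<theta>f"
    and "condQ Q e q"
    and "condB D A tf e q \<theta>X0 B \<theta>B"
    and "condP D A I V P"
    and "condU I q \<theta>U r \<epsilon> NU"
  shows "(\<exists>C. \<forall>h\<in>I. \<forall>s\<in>{0..tf}. \<forall>t\<in>{0..tf}. \<forall>v w.
            norm (f_h P f h s v - f_h P f h t w) \<le> C * (\<bar>s - t\<bar> powr (1/2) + norm (v - w)))
       \<and> (\<exists>C. \<forall>h\<in>I. \<forall>t\<in>{0..tf}. \<forall>u \<in> frac_dom D A \<theta>X0.
            L02_norm e q (\<lambda>z. blinfun_apply (P h) (B t u z) - B_h P e NU B h t u z)
              \<le> C * h powr (2 * \<theta>U + 1) * (1 + norm (frac_pow D A \<theta>X0 u)))
       \<and> (\<exists>C. \<forall>h\<in>I. \<forall>s\<in>{0..tf}. \<forall>t\<in>{0..tf}. \<forall>v w.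
            L02_norm e q (\<lambda>z. B_h P e NU B h s v z - B_h P e NU B h t w z)
              \<le> C * (\<bar>s - t\<bar> powr (1/2) + norm (v - w)))"
  proof -
  note cQ = assms(4)
  obtain Cp where Cp: "\<forall>h\<in>I. norm (P h) \<le> Cp" using assms(6) unfolding condP_def by blast
  define Cp' where "Cp' = max Cp 0"
  have Cp': "\<And>h. h \<in> I \<Longrightarrow> norm (P h) \<le> Cp'" "0 \<le> Cp'" using Cp unfolding Cp'_def by force+
  have Pb: "norm (blinfun_apply (P h) x) \<le> Cp' * norm x" if "h \<in> I" for h x
    using norm_blinfun[of "P h" x] Cp'(1)[OF that] mult_right_mono[OF Cp'(1)[OF that], of "norm x"]
    by simp
  obtain Cf where Cf: "\<forall>s t v w. norm (f s v - f t w) \<le> Cf * (\<bar>s - t\<bar> powr (1/2) + norm (v - w))"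
    using assms(3) unfolding condF_def by blast
  have inL: "\<forall>t\<in>{0..tf}. \<forall>v. in_L02 e q (B t v)" using assms(5) unfolding condB_def by blast
  obtain CB4 where CB4: "\<forall>t\<in>{0..tf}. \<forall>u \<in> frac_dom D A \<theta>X0. \<forall>z \<in> Q_half_U e q.
        norm (B t u z) \<le> CB4 * (1 + norm (frac_pow D A \<theta>X0 u)) * norm z"
    using assms(5) unfolding condB_def by blast
  obtain CB5 where CB5: "\<forall>s\<in>{0..tf}. \<forall>t\<in>{0..tf}. \<forall>v w.
        L02_norm e q (\<lambda>z. B s v z - B t w z) \<le> CB5 * (\<bar>s - t\<bar> powr (1/2) + norm (v - w))"
    using assms(5) unfolding condB_def by blast
  obtain c where c: "\<forall>k\<ge>1. \<bar>q k\<bar> \<le> c * real k powr (- (2 * r + 1 + \<epsilon>))"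
    using assms(7) unfolding condU_def by blast
  obtain Cu where Cu: "\<forall>h\<in>I. real (NU h + 1) powr (- r) \<le> Cu * h powr (2 * \<theta>U + 1)"
    using assms(7) unfolding condU_def by blast
  have r0: "0 \<le> r" and eps: "0 < \<epsilon>" using assms(7) unfolding condU_def by auto
  have q0: "\<And>k. k \<ge> 1 \<Longrightarrow> 0 \<le> q k" using cQ unfolding condQ_def by auto
  have c0: "0 \<le> c" using c[rule_format, of 1] by simp
  define x where "x k = sqrt (q k) *\<^sub>R e k" for k
  have xin: "\<And>k. k \<ge> 1 \<Longrightarrow> x k \<in> Q_half_U e q" unfolding x_def using xk_in[OF cQ] .
  have xn: "\<And>k. k \<ge> 1 \<Longrightarrow> norm (x k) = sqrt (q k)" unfolding x_def using xk_norm[OF cQ] .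
  have PU: "\<And>k N. k \<ge> 1 \<Longrightarrow> P_U e N (x k) = (if k \<le> N then x k else 0)"
    unfolding x_def using P_U_ek[OF cQ] .
  have B0: "B t v 0 = 0" if "t \<in> {0..tf}" for t v
    using lin_op_0[OF _ zero_in] inL that unfolding in_L02_def by blast
  define S where "S = infsum (\<lambda>k::nat. real k powr (-(1+\<epsilon>))) {1..}"
  have Ssum: "(\<lambda>k::nat. real k powr (-(1+\<epsilon>))) summable_on {1..}" using powr_summable_on[OF eps] .
  have S0: "0 \<le> S" unfolding S_def by (rule infsum_nonneg) simp
  show ?thesis
  proof (intro conjI)
    show "\<exists>C. \<forall>h\<in>I. \<forall>s\<in>{0..tf}. \<forall>t\<in>{0..tf}. \<forall>v w.
            norm (f_h P f h s v - f_h P f h t w) \<le> C * (\<bar>s - t\<bar> powr (1/2) + norm (v - w))"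
    proof (intro exI ballI allI)
      fix h s t v w assume h: "h \<in> I"
      have "norm (f_h P f h s v - f_h P f h t w) = norm (blinfun_apply (P h) (f s v - f t w))"
        unfolding f_h_def by (simp add: blinfun.diff_right)
      also have "\<dots> \<le> Cp' * norm (f s v - f t w)" using Pb[OF h] .
      also have "\<dots> \<le> Cp' * (Cf * (\<bar>s - t\<bar> powr (1/2) + norm (v - w)))"
        using Cf Cp'(2) by (intro mult_left_mono) auto
      finally show "norm (f_h P f h s v - f_h P f h t w) \<le> (Cp' * Cf) * (\<bar>s - t\<bar> powr (1/2) + norm (v - w))"
        by simp
    qed
  next
    define CB' where "CB' = max CB4 0"
    show "\<exists>C. \<forall>h\<in>I. \<forall>t\<in>{0..tf}. \<forall>u \<in> frac_dom D A \<theta>X0.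
            L02_norm e q (\<lambda>z. blinfun_apply (P h) (B t u z) - B_h P e NU B h t u z)
              \<le> C * h powr (2 * \<theta>U + 1) * (1 + norm (frac_pow D A \<theta>X0 u))"
    proof (intro exI ballI)
      fix h t u assume h: "h \<in> I" and t: "t \<in> {0..tf}" and u: "u \<in> frac_dom D A \<theta>X0"
      define a where "a = norm (frac_pow D A \<theta>X0 u)"
      define N where "N = NU h"
      have a0: "0 \<le> 1 + a" unfolding a_def by simp
      define M where "M = Cp' * CB' * (1 + a) * sqrt c * real (N + 1) powr (- r)"
      have M0: "0 \<le> M" unfolding M_def CB'_def using Cp'(2) a0 c0 by auto
      define g where "g k = (norm (blinfun_apply (P h) (B t u (x k)) - B_h P e NU B h t u (x k)))\<^sup>2" for k
      have gb: "g k \<le> M\<^sup>2 * real k powr (-(1+\<epsilon>))" if k: "k \<ge> 1" for k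
      proof (cases "k \<le> N")
        case True
        then have "g k = 0" unfolding g_def B_h_def using PU[OF k] N_def by simp
        then show ?thesis by simp
      next
        case False
        then have gk: "g k = (norm (blinfun_apply (P h) (B t u (x k))))\<^sup>2"
          unfolding g_def B_h_def using PU[OF k] N_def B0[OF t] by simp
        have "norm (B t u (x k)) \<le> CB4 * (1 + a) * sqrt (q k)"
          using CB4 t u xin[OF k] xn[OF k] unfolding a_def
          by (metis (no_types, lifting) atLeastAtMost_iff)
        also have "\<dots> \<le> CB' * (1 + a) * sqrt (q k)" unfolding CB'_def
          using a0 q0[OF k] by (intro mult_right_mono) auto
        finally have "norm (blinfun_apply (P h) (B t u (x k))) \<le> Cp' * (CB' * (1 + a) * sqrt (q k))"
          using Pb[OF h, of "B t u (x k)"] Cp'(2) by (meson mult_left_mono order_trans)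
        then have "g k \<le> (Cp' * (CB' * (1 + a) * sqrt (q k)))\<^sup>2"
          unfolding gk by (intro power_mono) auto
        also have "\<dots> = (Cp' * CB' * (1 + a))\<^sup>2 * q k"
          using q0[OF k] by (simp add: power_mult_distrib)
        also have "\<dots> \<le> (Cp' * CB' * (1 + a))\<^sup>2 * (c * (real (N+1) powr (-r))\<^sup>2 * real k powr (-(1+\<epsilon>)))"
        proof (intro mult_left_mono)
          have q1: "q k \<le> c * real k powr (- (2 * r + 1 + \<epsilon>))" using c k q0[OF k] by auto
          have e1: "real k powr (- (2 * r + 1 + \<epsilon>)) = real k powr (-2*r) * real k powr (-(1+\<epsilon>))"
            by (simp add: powr_add[symmetric] algebra_simps)
          have m1: "real k powr (-2*r) \<le> real (N+1) powr (-2*r)"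
            using False r0 by (intro powr_mono2') auto
          have e2: "real (N+1) powr (-2*r) = (real (N+1) powr (-r))\<^sup>2"
            by (simp add: power2_eq_square powr_add[symmetric])
          have "c * (real k powr (-2*r) * real k powr (-(1+\<epsilon>))) \<le> c * (real (N+1) powr (-2*r) * real k powr (-(1+\<epsilon>)))"
            using m1 c0 by (intro mult_left_mono mult_right_mono) auto
          then have "q k \<le> c * (real (N+1) powr (-2*r) * real k powr (-(1+\<epsilon>)))"
            using q1 unfolding e1 by linarith
          then show "q k \<le> c * (real (N+1) powr (-r))\<^sup>2 * real k powr (-(1+\<epsilon>))"
            unfolding e2 by (simp only: mult.assoc)
        qed simp
        also have "\<dots> = M\<^sup>2 * real k powr (-(1+\<epsilon>))"
          unfolding M_def using c0 by (simp add: power_mult_distrib)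
        finally show ?thesis .
      qed
      have "infsum g {1..} \<le> infsum (\<lambda>k. M\<^sup>2 * real k powr (-(1+\<epsilon>))) {1..}"
        by (rule infsum_le_real) (use gb Ssum summable_on_cmult_right in \<open>auto simp: g_def\<close>)
      also have "\<dots> = M\<^sup>2 * S" unfolding S_def by (rule infsum_cmult_right) (use Ssum in auto)
      finally have "sqrt (infsum g {1..}) \<le> sqrt (M\<^sup>2 * S)" by simp
      also have "\<dots> = M * sqrt S" using M0 by (simp add: real_sqrt_mult)
      also have "\<dots> \<le> Cp' * CB' * (1 + a) * sqrt c * (Cu * h powr (2 * \<theta>U + 1)) * sqrt S"
      proof -
        have X: "real (N+1) powr (-r) \<le> Cu * h powr (2 * \<theta>U + 1)" using Cu h unfolding N_def by blast
        have Y: "0 \<le> Cp' * CB' * (1 + a) * sqrt c" using Cp'(2) a0 c0 unfolding CB'_def by simp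
        have "0 \<le> sqrt S" using S0 by simp
        then show ?thesis unfolding M_def using mult_right_mono[OF mult_left_mono[OF X Y]] by simp
      qed
      also have "\<dots> = (Cp' * CB' * sqrt c * Cu * sqrt S) * h powr (2 * \<theta>U + 1) * (1 + a)"
        by simp
      finally show "L02_norm e q (\<lambda>z. blinfun_apply (P h) (B t u z) - B_h P e NU B h t u z)
              \<le> (Cp' * CB' * sqrt c * Cu * sqrt S) * h powr (2 * \<theta>U + 1) * (1 + norm (frac_pow D A \<theta>X0 u))"
        unfolding L02_norm_def g_def x_def a_def .
    qed
  next
    define CB' where "CB' = max CB5 0"
    show "\<exists>C. \<forall>h\<in>I. \<forall>s\<in>{0..tf}. \<forall>t\<in>{0..tf}. \<forall>v w.
            L02_norm e q (\<lambda>z. B_h P e NU B h s v z - B_h P e NU B h t w z)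
              \<le> C * (\<bar>s - t\<bar> powr (1/2) + norm (v - w))"
    proof (intro exI ballI allI)
      fix h s t v w assume h: "h \<in> I" and s: "s \<in> {0..tf}" and t: "t \<in> {0..tf}"
      define N where "N = NU h"
      define g where "g k = (norm (B s v (x k) - B t w (x k)))\<^sup>2" for k
      define G where "G k = (norm (B_h P e NU B h s v (x k) - B_h P e NU B h t w (x k)))\<^sup>2" for k
      have s1: "(\<lambda>k. (norm (B s v (x k)))\<^sup>2) summable_on {1..}"
        using inL s unfolding in_L02_def x_def by blast
      have s2: "(\<lambda>k. (norm (B t w (x k)))\<^sup>2) summable_on {1..}"
        using inL t unfolding in_L02_def x_def by blast
      have s3: "(\<lambda>k. 2 * (norm (B s v (x k)))\<^sup>2 + 2 * (norm (B t w (x k)))\<^sup>2) summable_on {1..}"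
        by (intro summable_on_add summable_on_cmult_right s1 s2)
      have gsum: "g summable_on {1..}"
      proof (rule summable_on_comparison_test[OF s3])
        fix k :: nat
        have "norm (B s v (x k) - B t w (x k)) \<le> norm (B s v (x k)) + norm (B t w (x k))"
          by (rule norm_triangle_ineq4)
        then have "g k \<le> (norm (B s v (x k)) + norm (B t w (x k)))\<^sup>2"
          unfolding g_def by (intro power_mono) auto
        also have "\<dots> \<le> 2 * (norm (B s v (x k)))\<^sup>2 + 2 * (norm (B t w (x k)))\<^sup>2"
        proof -
          have "0 \<le> (norm (B s v (x k)) - norm (B t w (x k)))\<^sup>2" by simp
          then show ?thesis unfolding power2_eq_square by (simp add: algebra_simps)
        qed
        finally show "g k \<le> 2 * (norm (B s v (x k)))\<^sup>2 + 2 * (norm (B t w (x k)))\<^sup>2" .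
      qed (simp add: g_def)
      have Gb: "G k \<le> Cp'\<^sup>2 * g k" if k: "k \<ge> 1" for k
      proof (cases "k \<le> N")
        case True
        then have "G k = (norm (blinfun_apply (P h) (B s v (x k) - B t w (x k))))\<^sup>2"
          unfolding G_def B_h_def using PU[OF k] N_def by (simp add: blinfun.diff_right)
        also have "\<dots> \<le> (Cp' * norm (B s v (x k) - B t w (x k)))\<^sup>2"
          using Pb[OF h] by (intro power_mono) auto
        finally show ?thesis unfolding g_def by (simp add: power_mult_distrib)
      next
        case False
        then have "G k = 0" unfolding G_def B_h_def using PU[OF k] N_def B0[OF s] B0[OF t] by simp
        then show ?thesis unfolding g_def by simp
      qed
      have "infsum G {1..} \<le> infsum (\<lambda>k. Cp'\<^sup>2 * g k) {1..}"
        by (rule infsum_le_real) (use Gb gsum summable_on_cmult_right in \<open>auto simp: G_def\<close>)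
      also have "\<dots> = Cp'\<^sup>2 * infsum g {1..}" by (rule infsum_cmult_right) (use gsum in auto)
      finally have "sqrt (infsum G {1..}) \<le> sqrt (Cp'\<^sup>2 * infsum g {1..})" by simp
      also have "\<dots> = Cp' * sqrt (infsum g {1..})" using Cp'(2) by (simp add: real_sqrt_mult)
      also have "sqrt (infsum g {1..}) = L02_norm e q (\<lambda>z. B s v z - B t w z)"
        unfolding L02_norm_def g_def x_def ..
      also have "\<dots> \<le> CB' * (\<bar>s - t\<bar> powr (1/2) + norm (v - w))"
      proof -
        have X0: "0 \<le> \<bar>s - t\<bar> powr (1/2) + norm (v - w)" by simp
        have "L02_norm e q (\<lambda>z. B s v z - B t w z) \<le> CB5 * (\<bar>s - t\<bar> powr (1/2) + norm (v - w))"
          using CB5 s t by blast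
        also have "\<dots> \<le> CB' * (\<bar>s - t\<bar> powr (1/2) + norm (v - w))"
          unfolding CB'_def by (rule mult_right_mono[OF max.cobounded1 X0])
        finally show ?thesis .
      qed
      finally have "sqrt (infsum G {1..}) \<le> Cp' * (CB' * (\<bar>s - t\<bar> powr (1/2) + norm (v - w)))"
        using Cp'(2) by (simp add: mult_left_mono)
      then show "L02_norm e q (\<lambda>z. B_h P e NU B h s v z - B_h P e NU B h t w z)
              \<le> (Cp' * CB') * (\<bar>s - t\<bar> powr (1/2) + norm (v - w))"
        unfolding L02_norm_def G_def x_def by (simp add: mult.assoc)
    qed
  qed
qed

end
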